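(* Let $\mathbf{C}$ be a category all of whose morphisms are monomorphisms, enriched over $\mathbf{Top}$ with all homsets Hausdorff. Let $\mathbf{D}$ be a full subcategory of $\mathbf{C}$ which is a skeletal category of finite objects, and let $S \in \mathrm{Ob}(\mathbf{C})$ be universal for $\mathbf{D}$ and approximable in $\mathbf{D}$ via $F : \mathrm{Ob}(\mathbf{D}) \to \mathrm{Ob}(\mathbf{D})$ and $(\Phi_A)_{A \in \mathrm{Ob}(\mathbf{D})}$. Let $\mathfrak{G} = (G_A)_{A \in \mathrm{Ob}(\mathbf{C})}$ be a family of groups with $G_A \le \mathrm{Aut}_\mathbf{C}(A)$ for all $A$. Assume $\hom_\mathbf{C}(A,S)$ is locally compact second-countable Hausdorff for every $A \in \mathrm{Ob}(\mathbf{D})$. Then for every $A \in \mathrm{Ob}(\mathbf{D})$, $|G_A|$ and $|G_{F(A)}|$ are integers and $$t^\mathfrak{G}_\mathbf{D}(A) \le \frac{|G_{F(A)}|}{|G_A|}\cdot T^\mathfrak{G}_\mathbf{C}(F(A),S).$$ In particular, if $T^\mathfrak{G}_\mathbf{C}(A,S) < \infty$ for every $A \in \mathrm{Ob}(\mathbf{D})$, then $t^\mathfrak{G}_\mathbf{D}(A) < \infty$ for every $A \in \mathrm{Ob}(\mathbf{D})$.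
   Context: A category is enriched over $\mathbf{Top}$ if each homset is a topological space and composition is continuous. Skeletal: no two distinct objects are isomorphic. A category of finite objects is a locally small directed category whose morphisms are monomorphisms, whose skeleton has at most countably many objects, and in whose skeleton each object is the codomain of only finitely many morphisms. $S$ is universal for $\mathbf{D}$ if $\hom_\mathbf{C}(D,S)\ne\varnothing$ for all $D\in\mathrm{Ob}(\mathbf{D})$. $S$ is approximable in $\mathbf{D}$ via $F$ and $(\Phi_A)$ if each $\Phi_A:\hom_\mathbf{C}(F(A),S)\to\bigcup_{C\in\mathrm{Ob}(\mathbf{D})}\hom_\mathbf{D}(A,C)$ is Borel (preimages of open subsets of each $\hom_\mathbf{D}(A,C)$ are Borel) and for all $A,B\in\mathrm{Ob}(\mathbf{D})$, $f\in\hom_\mathbf{D}(A,B)$, $u\in\hom_\mathbf{C}(F(B),S)$ there is $f'\in\hom_\mathbf{D}(F(A),F(B))$ with $\Phi_A(u\cdot f')=\Phi_B(u)\cdot f$. $\mathrm{Aut}_\mathbf{C}(A)$ is the group of invertible morphisms $A\to A$. For $f,g\in\hom(A,X)$, $f\sim_\mathfrak{G}g$ iff $f=g\cdot\alpha$ for some $\alpha\in G_A$; $\binom{X}{A}_\mathfrak{G}=\hom(A,X)/{\sim_\mathfrak{G}}$ with the quotient topology; $w\cdot\binom{X}{A}_\mathfrak{G}=\{(w\cdot f)/{\sim_\mathfrak{G}}:f\in\hom(A,X)\}$. $t^\mathfrak{G}_\mathbf{D}(A)$ is the least positive integer $n$ such that for all $k\in\mathbb{N}$ and $B\in\mathrm{Ob}(\mathbf{D})$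 there is $C\in\mathrm{Ob}(\mathbf{D})$ such that every coloring $\chi:\binom{C}{A}_\mathfrak{G}\to\{0,\dots,k-1\}$ admits $w\in\hom(B,C)$ with $|\chi(w\cdot\binom{B}{A}_\mathfrak{G})|\le n$; $\infty$ if none. $T^\mathfrak{G}_\mathbf{C}(X,S)$ is the least positive integer $n$ such that for every $k\ge 2$ and every Borel coloring $\chi:\binom{S}{X}_\mathfrak{G}\to\{0,\dots,k-1\}$ (all fibers Borel) there is $w\in\hom(S,S)$ with $|\chi(w\cdot\binom{S}{X}_\mathfrak{G})|\le n$; $\infty$ if none. Arithmetic is in $\mathbb{N}_\infty=\{1,2,\dots,\infty\}$ with $n\cdot\infty=\infty$. *)

theory Defs
  imports "HOL-Analysis.Analysis"
begin

text \<open>A category is given by a set of objects Ob, a set of morphisms Mor, domain and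
codomain maps, a (partial) composition cmp g f (meaning g after f, written g.f in the
paper) and identities.\<close>

definition hom :: "'m set \<Rightarrow> ('m \<Rightarrow> 'o) \<Rightarrow> ('m \<Rightarrow> 'o) \<Rightarrow> 'o \<Rightarrow> 'o \<Rightarrow> 'm set" where
  "hom Mor dm cd A B = {f \<in> Mor. dm f = A \<and> cd f = B}"

definition is_category ::
  "'o set \<Rightarrow> 'm set \<Rightarrow> ('m \<Rightarrow> 'o) \<Rightarrow> ('m \<Rightarrow> 'o) \<Rightarrow> ('m \<Rightarrow> 'm \<Rightarrow> 'm) \<Rightarrow> ('o \<Rightarrow> 'm) \<Rightarrow> bool" where
  "is_category Ob Mor dm cd cmp ident \<longleftrightarrow>
     (\<forall>f\<in>Mor. dm f \<in> Ob \<and> cd f \<in> Ob) \<and>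
     (\<forall>A\<in>Ob. ident A \<in> hom Mor dm cd A A) \<and>
     (\<forall>A\<in>Ob. \<forall>B\<in>Ob. \<forall>C\<in>Ob. \<forall>f\<in>hom Mor dm cd A B. \<forall>g\<in>hom Mor dm cd B C.
        cmp g f \<in> hom Mor dm cd A C) \<and>
     (\<forall>f\<in>Mor. cmp (ident (cd f)) f = f \<and> cmp f (ident (dm f)) = f) \<and>
     (\<forall>f\<in>Mor. \<forall>g\<in>Mor. \<forall>h\<in>Mor. dm g = cd f \<longrightarrow> dm h = cd g \<longrightarrow>
        cmp h (cmp g f) = cmp (cmp h g) f)"

definition all_mono :: "'m set \<Rightarrow> ('m \<Rightarrow> 'o) \<Rightarrow> ('m \<Rightarrow> 'o) \<Rightarrow> ('m \<Rightarrow> 'm \<Rightarrow> 'm) \<Rightarrow> bool" where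
  "all_mono Mor dm cd cmp \<longleftrightarrow>
     (\<forall>f\<in>Mor. \<forall>g\<in>Mor. \<forall>h\<in>Mor. dm g = dm h \<longrightarrow> cd g = dm f \<longrightarrow> cd h = dm f \<longrightarrow>
        cmp f g = cmp f h \<longrightarrow> g = h)"

definition Top_enriched ::
  "'o set \<Rightarrow> 'm set \<Rightarrow> ('m \<Rightarrow> 'o) \<Rightarrow> ('m \<Rightarrow> 'o) \<Rightarrow> ('m \<Rightarrow> 'm \<Rightarrow> 'm) \<Rightarrow> ('o \<Rightarrow> 'o \<Rightarrow> 'm topology) \<Rightarrow> bool" where
  "Top_enriched Ob Mor dm cd cmp T \<longleftrightarrow>
     (\<forall>A\<in>Ob. \<forall>B\<in>Ob. topspace (T A B) = hom Mor dm cd A B) \<and>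
     (\<forall>A\<in>Ob. \<forall>B\<in>Ob. \<forall>C\<in>Ob.
        continuous_map (prod_topology (T B C) (T A B)) (T A C) (\<lambda>(g, f). cmp g f))"

definition Aut :: "'m set \<Rightarrow> ('m \<Rightarrow> 'o) \<Rightarrow> ('m \<Rightarrow> 'o) \<Rightarrow> ('m \<Rightarrow> 'm \<Rightarrow> 'm) \<Rightarrow> ('o \<Rightarrow> 'm) \<Rightarrow> 'o \<Rightarrow> 'm set" where
  "Aut Mor dm cd cmp ident A =
     {f \<in> hom Mor dm cd A A. \<exists>g\<in>hom Mor dm cd A A. cmp g f = ident A \<and> cmp f g = ident A}"

definition subgroup_Aut :: "'m set \<Rightarrow> ('m \<Rightarrow> 'o) \<Rightarrow> ('m \<Rightarrow> 'o) \<Rightarrow> ('m \<Rightarrow> 'm \<Rightarrow> 'm) \<Rightarrow> ('o \<Rightarrow> 'm) \<Rightarrow> 'o \<Rightarrow> 'm set \<Rightarrow> bool" where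
  "subgroup_Aut Mor dm cd cmp ident A H \<longleftrightarrow>
     H \<subseteq> Aut Mor dm cd cmp ident A \<and> ident A \<in> H \<and>
     (\<forall>f\<in>H. \<forall>g\<in>H. cmp g f \<in> H) \<and>
     (\<forall>f\<in>H. \<exists>g\<in>H. cmp g f = ident A \<and> cmp f g = ident A)"

definition isomorphic :: "'m set \<Rightarrow> ('m \<Rightarrow> 'o) \<Rightarrow> ('m \<Rightarrow> 'o) \<Rightarrow> ('m \<Rightarrow> 'm \<Rightarrow> 'm) \<Rightarrow> ('o \<Rightarrow> 'm) \<Rightarrow> 'o \<Rightarrow> 'o \<Rightarrow> bool" where
  "isomorphic Mor dm cd cmp ident A B \<longleftrightarrow>
     (\<exists>f\<in>hom Mor dm cd A B. \<exists>g\<in>hom Mor dm cd B A. cmp g f = ident A \<and> cmp f g = ident B)"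

text \<open>The full subcategory of C on the object set DOb is a skeletal category of finite
objects: directed, all morphisms mono (automatic here), skeletal (so it is its own
skeleton), countably many objects, each object the codomain of finitely many morphisms.\<close>
definition skeletal_cat_finite_objects ::
  "'m set \<Rightarrow> ('m \<Rightarrow> 'o) \<Rightarrow> ('m \<Rightarrow> 'o) \<Rightarrow> ('m \<Rightarrow> 'm \<Rightarrow> 'm) \<Rightarrow> ('o \<Rightarrow> 'm) \<Rightarrow> 'o set \<Rightarrow> bool" where
  "skeletal_cat_finite_objects Mor dm cd cmp ident DOb \<longleftrightarrow>
     (\<forall>A\<in>DOb. \<forall>B\<in>DOb. \<exists>C\<in>DOb. hom Mor dm cd A C \<noteq> {} \<and> hom Mor dm cd B C \<noteq> {}) \<and>
     all_mono {f \<in> Mor. dm f \<in> DOb \<and> cd f \<in> DOb} dm cd cmp \<and>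
     (\<forall>A\<in>DOb. \<forall>B\<in>DOb. isomorphic Mor dm cd cmp ident A B \<longrightarrow> A = B) \<and>
     countable DOb \<and>
     (\<forall>B\<in>DOb. finite {f \<in> Mor. dm f \<in> DOb \<and> cd f = B})"

definition borel_sets :: "'a topology \<Rightarrow> 'a set set" where
  "borel_sets X = sigma_sets (topspace X) {U. openin X U}"

definition gclass :: "('m \<Rightarrow> 'm \<Rightarrow> 'm) \<Rightarrow> 'm set \<Rightarrow> 'm \<Rightarrow> 'm set" where
  "gclass cmp GA f = (\<lambda>\<alpha>. cmp f \<alpha>) ` GA"

definition binom :: "'m set \<Rightarrow> ('m \<Rightarrow> 'o) \<Rightarrow> ('m \<Rightarrow> 'o) \<Rightarrow> ('m \<Rightarrow> 'm \<Rightarrow> 'm) \<Rightarrow> ('o \<Rightarrow> 'm set) \<Rightarrow> 'o \<Rightarrow> 'o \<Rightarrow> 'm set set" where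
  "binom Mor dm cd cmp G X A = gclass cmp (G A) ` hom Mor dm cd A X"

definition wbinom :: "'m set \<Rightarrow> ('m \<Rightarrow> 'o) \<Rightarrow> ('m \<Rightarrow> 'o) \<Rightarrow> ('m \<Rightarrow> 'm \<Rightarrow> 'm) \<Rightarrow> ('o \<Rightarrow> 'm set) \<Rightarrow> 'm \<Rightarrow> 'o \<Rightarrow> 'o \<Rightarrow> 'm set set" where
  "wbinom Mor dm cd cmp G w X A = (\<lambda>f. gclass cmp (G A) (cmp w f)) ` hom Mor dm cd A X"

definition binom_borel :: "'m set \<Rightarrow> ('m \<Rightarrow> 'o) \<Rightarrow> ('m \<Rightarrow> 'o) \<Rightarrow> ('m \<Rightarrow> 'm \<Rightarrow> 'm) \<Rightarrow> ('o \<Rightarrow> 'o \<Rightarrow> 'm topology) \<Rightarrow> ('o \<Rightarrow> 'm set) \<Rightarrow> 'o \<Rightarrow> 'o \<Rightarrow> 'm set set set" where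
  "binom_borel Mor dm cd cmp T G X A =
     (let Q = binom Mor dm cd cmp G X A in
      sigma_sets Q {U. U \<subseteq> Q \<and>
        openin (T A X) {f \<in> hom Mor dm cd A X. gclass cmp (G A) f \<in> U}})"

definition least_pos_or_inf :: "(nat \<Rightarrow> bool) \<Rightarrow> ereal" where
  "least_pos_or_inf P = (if \<exists>n. n \<ge> 1 \<and> P n then ereal (real (LEAST n. n \<ge> 1 \<and> P n)) else \<infinity>)"

definition small_ramsey_degree :: "'m set \<Rightarrow> ('m \<Rightarrow> 'o) \<Rightarrow> ('m \<Rightarrow> 'o) \<Rightarrow> ('m \<Rightarrow> 'm \<Rightarrow> 'm) \<Rightarrow> ('o \<Rightarrow> 'm set) \<Rightarrow> 'o set \<Rightarrow> 'o \<Rightarrow> ereal" where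
  "small_ramsey_degree Mor dm cd cmp G DOb A = least_pos_or_inf (\<lambda>n.
     \<forall>k::nat. \<forall>B\<in>DOb. \<exists>C\<in>DOb. \<forall>(col :: 'm set \<Rightarrow> nat).
       (\<forall>c\<in>binom Mor dm cd cmp G C A. col c < k) \<longrightarrow>
       (\<exists>w\<in>hom Mor dm cd B C. card (col ` wbinom Mor dm cd cmp G w B A) \<le> n))"

definition big_ramsey_degree :: "'m set \<Rightarrow> ('m \<Rightarrow> 'o) \<Rightarrow> ('m \<Rightarrow> 'o) \<Rightarrow> ('m \<Rightarrow> 'm \<Rightarrow> 'm) \<Rightarrow> ('o \<Rightarrow> 'o \<Rightarrow> 'm topology) \<Rightarrow> ('o \<Rightarrow> 'm set) \<Rightarrow> 'o \<Rightarrow> 'o \<Rightarrow> ereal" where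
  "big_ramsey_degree Mor dm cd cmp T G X S = least_pos_or_inf (\<lambda>n.
     \<forall>k::nat. k \<ge> 2 \<longrightarrow> (\<forall>(col :: 'm set \<Rightarrow> nat).
       (\<forall>c\<in>binom Mor dm cd cmp G S X. col c < k) \<longrightarrow>
       (\<forall>i<k. {c \<in> binom Mor dm cd cmp G S X. col c = i} \<in> binom_borel Mor dm cd cmp T G S X) \<longrightarrow>
       (\<exists>w\<in>hom Mor dm cd S S. card (col ` wbinom Mor dm cd cmp G w S X) \<le> n)))"

definition approximable :: "'m set \<Rightarrow> ('m \<Rightarrow> 'o) \<Rightarrow> ('m \<Rightarrow> 'o) \<Rightarrow> ('m \<Rightarrow> 'm \<Rightarrow> 'm) \<Rightarrow> ('o \<Rightarrow> 'o \<Rightarrow> 'm topology) \<Rightarrow> 'o set \<Rightarrow> 'o \<Rightarrow> ('o \<Rightarrow> 'o) \<Rightarrow> ('o \<Rightarrow> 'm \<Rightarrow> 'm) \<Rightarrow> bool" where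
  "approximable Mor dm cd cmp T DOb S F \<Phi> \<longleftrightarrow>
     (\<forall>A\<in>DOb. F A \<in> DOb) \<and>
     (\<forall>A\<in>DOb. \<forall>u\<in>hom Mor dm cd (F A) S. \<Phi> A u \<in> (\<Union>C\<in>DOb. hom Mor dm cd A C)) \<and>
     (\<forall>A\<in>DOb. \<forall>C\<in>DOb. \<forall>U. openin (T A C) U \<longrightarrow>
        {u \<in> hom Mor dm cd (F A) S. \<Phi> A u \<in> U} \<in> borel_sets (T (F A) S)) \<and>
     (\<forall>A\<in>DOb. \<forall>B\<in>DOb. \<forall>f\<in>hom Mor dm cd A B. \<forall>u\<in>hom Mor dm cd (F B) S.
        \<exists>f'\<in>hom Mor dm cd (F A) (F B). \<Phi> A (cmp u f') = cmp (\<Phi> B u) f)"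

end

theory Submission
  imports Defs "HOL-Library.Nat_Bijection"
begin


lemma borel_sa: "sigma_algebra (topspace X) (borel_sets X)"
  unfolding borel_sets_def by (rule sigma_algebra_sigma_sets) (auto dest: openin_subset)

lemma open_borel: "openin X U \<Longrightarrow> U \<in> borel_sets X"
  unfolding borel_sets_def by auto

lemma borel_preimage:
  assumes f: "continuous_map X Y f" and E: "E \<in> borel_sets Y"
  shows "{x \<in> topspace X. f x \<in> E} \<in> borel_sets X"
  using E unfolding borel_sets_def
proof (induction rule: sigma_sets.induct)
  case (Basic a)
  then have "openin X {x \<in> topspace X. f x \<in> a}" using openin_continuous_map_preimage[OF f] by simp
  then show ?case by (simp add: sigma_sets.Basic)
next
  case Empty
  show ?case by (simp add: sigma_sets.Empty)
next
  case (Compl a)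
  have sub: "\<forall>x\<in>topspace X. f x \<in> topspace Y" using f unfolding continuous_map_def by blast
  have eq: "{x \<in> topspace X. f x \<in> topspace Y - a} = topspace X - {x \<in> topspace X. f x \<in> a}"
    using sub by blast
  show ?case unfolding eq by (rule sigma_sets.Compl[OF Compl.IH])
next
  case (Union a)
  have eq: "{x \<in> topspace X. f x \<in> (\<Union>i. a i)} = (\<Union>i. {x \<in> topspace X. f x \<in> a i})" by blast
  show ?case unfolding eq by (rule sigma_sets.Union[OF Union.IH])
qed

lemma finite_Hausdorff_open:
  assumes "Hausdorff_space X" "finite (topspace X)" "U \<subseteq> topspace X"
  shows "openin X U"
proof -
  have eq: "X = discrete_topology (topspace X)"
    by (rule finite_topspace_imp_discrete_topology[OF refl assms(2,1)])
  show ?thesis by (subst eq) (simp add: assms(3))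
qed


locale ctx =
  fixes Ob :: "'o set" and Mor :: "'m set" and dm cd :: "'m \<Rightarrow> 'o"
    and cmp :: "'m \<Rightarrow> 'm \<Rightarrow> 'm" and ident :: "'o \<Rightarrow> 'm" and G :: "'o \<Rightarrow> 'm set"
  assumes cat: "is_category Ob Mor dm cd cmp ident"
    and mono: "all_mono Mor dm cd cmp"
    and groups: "\<forall>A\<in>Ob. subgroup_Aut Mor dm cd cmp ident A (G A)"
begin

abbreviation "Hom \<equiv> hom Mor dm cd"

lemma homD: "f \<in> Hom A B \<Longrightarrow> f \<in> Mor \<and> dm f = A \<and> cd f = B"
  by (simp add: hom_def)

lemma homI: "f \<in> Mor \<Longrightarrow> dm f = A \<Longrightarrow> cd f = B \<Longrightarrow> f \<in> Hom A B"
  by (simp add: hom_def)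

lemma cat_parts:
  "\<forall>f\<in>Mor. dm f \<in> Ob \<and> cd f \<in> Ob"
  "\<forall>A\<in>Ob. ident A \<in> Hom A A"
  "\<forall>A\<in>Ob. \<forall>B\<in>Ob. \<forall>C\<in>Ob. \<forall>f\<in>Hom A B. \<forall>g\<in>Hom B C. cmp g f \<in> Hom A C"
  "\<forall>f\<in>Mor. cmp (ident (cd f)) f = f \<and> cmp f (ident (dm f)) = f"
  "\<forall>f\<in>Mor. \<forall>g\<in>Mor. \<forall>h\<in>Mor. dm g = cd f \<longrightarrow> dm h = cd g \<longrightarrow>
        cmp h (cmp g f) = cmp (cmp h g) f"
  using cat unfolding is_category_def by simp_all

lemma hom_Ob: "f \<in> Hom A B \<Longrightarrow> A \<in> Ob \<and> B \<in> Ob"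
  using cat_parts(1) homD by metis

lemma comp_hom: "f \<in> Hom A B \<Longrightarrow> g \<in> Hom B C \<Longrightarrow> cmp g f \<in> Hom A C"
proof -
  assume f: "f \<in> Hom A B" and g: "g \<in> Hom B C"
  have "A \<in> Ob" "B \<in> Ob" "C \<in> Ob" using hom_Ob[OF f] hom_Ob[OF g] by auto
  then show ?thesis using cat_parts(3)[rule_format, of A B C f g] f g by simp
qed

lemma assoc: "f \<in> Hom A B \<Longrightarrow> g \<in> Hom B C \<Longrightarrow> h \<in> Hom C D \<Longrightarrow>
   cmp h (cmp g f) = cmp (cmp h g) f"
proof -
  assume f: "f \<in> Hom A B" and g: "g \<in> Hom B C" and h: "h \<in> Hom C D"
  show ?thesis using cat_parts(5)[rule_format, of f g h] homD[OF f] homD[OF g] homD[OF h] by simp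
qed

lemma ident_hom: "A \<in> Ob \<Longrightarrow> ident A \<in> Hom A A"
  using cat_parts(2) by blast

lemma ident_right: "f \<in> Hom A B \<Longrightarrow> cmp f (ident A) = f"
  using cat_parts(4) homD by metis

lemma ident_left: "f \<in> Hom A B \<Longrightarrow> cmp (ident B) f = f"
  using cat_parts(4) homD by metis

lemma cancel: "f \<in> Hom B C \<Longrightarrow> g \<in> Hom A B \<Longrightarrow> h \<in> Hom A B \<Longrightarrow> cmp f g = cmp f h \<Longrightarrow> g = h"
proof -
  assume f: "f \<in> Hom B C" and g: "g \<in> Hom A B" and h: "h \<in> Hom A B" and e: "cmp f g = cmp f h"
  show ?thesis using mono[unfolded all_mono_def, rule_format, of f g h] homD[OF f] homD[OF g] homD[OF h] e
    by simp
qed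

lemma sgA: "A \<in> Ob \<Longrightarrow> subgroup_Aut Mor dm cd cmp ident A (G A)"
  using groups by blast

lemma G_hom: "A \<in> Ob \<Longrightarrow> \<alpha> \<in> G A \<Longrightarrow> \<alpha> \<in> Hom A A"
proof -
  assume A: "A \<in> Ob" and a: "\<alpha> \<in> G A"
  have "G A \<subseteq> Aut Mor dm cd cmp ident A" using sgA[OF A] unfolding subgroup_Aut_def by simp
  then have "\<alpha> \<in> Aut Mor dm cd cmp ident A" using a by blast
  then show ?thesis unfolding Aut_def by simp
qed

lemma G_id: "A \<in> Ob \<Longrightarrow> ident A \<in> G A"
  using sgA unfolding subgroup_Aut_def by simp

lemma G_comp: "A \<in> Ob \<Longrightarrow> \<alpha> \<in> G A \<Longrightarrow> \<beta> \<in> G A \<Longrightarrow> cmp \<alpha> \<beta> \<in> G A"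
  using sgA unfolding subgroup_Aut_def by simp

lemma G_inv: "A \<in> Ob \<Longrightarrow> \<alpha> \<in> G A \<Longrightarrow> \<exists>\<beta>\<in>G A. cmp \<beta> \<alpha> = ident A \<and> cmp \<alpha> \<beta> = ident A"
  using sgA unfolding subgroup_Aut_def by simp

lemma gclass_comp:
  assumes x: "x \<in> Hom A X" and a: "\<alpha> \<in> G A"
  shows "gclass cmp (G A) (cmp x \<alpha>) = gclass cmp (G A) x"
proof -
  have A: "A \<in> Ob" using x hom_Ob by blast
  obtain \<alpha>' where a': "\<alpha>' \<in> G A" "cmp \<alpha>' \<alpha> = ident A" "cmp \<alpha> \<alpha>' = ident A"
    using G_inv[OF A a] by blast
  show ?thesis unfolding gclass_def
  proof (intro equalityI subsetI)
    fix y assume "y \<in> (\<lambda>\<beta>. cmp (cmp x \<alpha>) \<beta>) ` G A"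
    then obtain \<beta> where b: "\<beta> \<in> G A" "y = cmp (cmp x \<alpha>) \<beta>" by auto
    then have "y = cmp x (cmp \<alpha> \<beta>)" using assoc[OF G_hom[OF A b(1)] G_hom[OF A a] x] by simp
    then show "y \<in> (\<lambda>\<beta>. cmp x \<beta>) ` G A" using G_comp[OF A a b(1)] by auto
  next
    fix y assume "y \<in> (\<lambda>\<beta>. cmp x \<beta>) ` G A"
    then obtain \<beta> where b: "\<beta> \<in> G A" "y = cmp x \<beta>" by auto
    have "cmp (cmp x \<alpha>) (cmp \<alpha>' \<beta>) = cmp x (cmp \<alpha> (cmp \<alpha>' \<beta>))"
      using assoc[OF comp_hom[OF G_hom[OF A b(1)] G_hom[OF A a'(1)]] G_hom[OF A a] x] by simp
    also have "cmp \<alpha> (cmp \<alpha>' \<beta>) = \<beta>"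
      using assoc[OF G_hom[OF A b(1)] G_hom[OF A a'(1)] G_hom[OF A a]] a'(3) ident_left[OF G_hom[OF A b(1)]]
      by simp
    finally have "y = cmp (cmp x \<alpha>) (cmp \<alpha>' \<beta>)" using b(2) by simp
    moreover have "cmp \<alpha>' \<beta> \<in> G A" using G_comp[OF A a'(1) b(1)] .
    ultimately show "y \<in> (\<lambda>\<beta>. cmp (cmp x \<alpha>) \<beta>) ` G A" by blast
  qed
qed

lemma gclass_self: "x \<in> Hom A X \<Longrightarrow> x \<in> gclass cmp (G A) x"
proof -
  assume x: "x \<in> Hom A X"
  have "ident A \<in> G A" using G_id hom_Ob[OF x] by blast
  moreover have "x = cmp x (ident A)" using ident_right[OF x] by simp
  ultimately show ?thesis unfolding gclass_def by blast
qed

lemma gclass_mem: "x \<in> Hom A X \<Longrightarrow> y \<in> gclass cmp (G A) x \<Longrightarrow>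
   \<exists>\<beta>\<in>G A. y = cmp x \<beta>"
  unfolding gclass_def by auto

lemma gclass_mem_eq: "x \<in> Hom A X \<Longrightarrow> y \<in> gclass cmp (G A) x \<Longrightarrow>
   gclass cmp (G A) y = gclass cmp (G A) x"
proof -
  assume x: "x \<in> Hom A X" and y: "y \<in> gclass cmp (G A) x"
  obtain \<beta> where "\<beta> \<in> G A" "y = cmp x \<beta>" using gclass_mem[OF x y] by blast
  then show ?thesis using gclass_comp[OF x] by simp
qed

lemma gclass_hom: "x \<in> Hom A X \<Longrightarrow> y \<in> gclass cmp (G A) x \<Longrightarrow> y \<in> Hom A X"
proof -
  assume x: "x \<in> Hom A X" and y: "y \<in> gclass cmp (G A) x"
  obtain \<beta> where b: "\<beta> \<in> G A" "y = cmp x \<beta>" using gclass_mem[OF x y] by blast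
  have A: "A \<in> Ob" using hom_Ob[OF x] by simp
  show ?thesis using comp_hom[OF G_hom[OF A b(1)] x] b(2) by simp
qed

lemma gclass_eq_iff: "x \<in> Hom A X \<Longrightarrow> y \<in> Hom A X \<Longrightarrow>
   gclass cmp (G A) y = gclass cmp (G A) x \<longleftrightarrow> (\<exists>\<beta>\<in>G A. y = cmp x \<beta>)"
proof
  assume x: "x \<in> Hom A X" and y: "y \<in> Hom A X" and e: "gclass cmp (G A) y = gclass cmp (G A) x"
  have "y \<in> gclass cmp (G A) x" using gclass_self[OF y] e by simp
  then show "\<exists>\<beta>\<in>G A. y = cmp x \<beta>" using gclass_mem[OF x] by blast
next
  assume x: "x \<in> Hom A X" and "\<exists>\<beta>\<in>G A. y = cmp x \<beta>"
  then obtain \<beta> where "\<beta> \<in> G A" "y = cmp x \<beta>" by blast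
  then show "gclass cmp (G A) y = gclass cmp (G A) x" using gclass_comp[OF x] by simp
qed

lemma gclass_finite_card: "finite (G A) \<Longrightarrow> card (gclass cmp (G A) x) \<le> card (G A)"
  unfolding gclass_def by (rule card_image_le)

end


context ctx
begin

lemma quot_borel:
  fixes T :: "'o \<Rightarrow> 'o \<Rightarrow> 'm topology" and A0 S :: 'o
  assumes A0: "A0 \<in> Ob" and S: "S \<in> Ob"
    and top: "topspace (T A0 S) = Hom A0 S"
    and haus: "Hausdorff_space (T A0 S)" and sc: "second_countable (T A0 S)"
    and cont: "\<forall>\<beta>\<in>G A0. continuous_map (T A0 S) (T A0 S) (\<lambda>u. cmp u \<beta>)"
    and finG: "finite (G A0)"
    and W: "W \<subseteq> binom Mor dm cd cmp G S A0"
    and E: "{u \<in> Hom A0 S. gclass cmp (G A0) u \<in> W} \<in> borel_sets (T A0 S)"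
  shows "W \<in> binom_borel Mor dm cd cmp T G S A0"
proof -
  define X where "X = T A0 S"
  define q where "q = gclass cmp (G A0)"
  define Q where "Q = binom Mor dm cd cmp G S A0"
  define gens where "gens = {U. U \<subseteq> Q \<and> openin X {f \<in> Hom A0 S. q f \<in> U}}"
  have Sig: "binom_borel Mor dm cd cmp T G S A0 = sigma_sets Q gens"
    unfolding binom_borel_def gens_def Q_def X_def q_def Let_def by simp
  have Qeq: "Q = q ` Hom A0 S" unfolding Q_def q_def binom_def by simp
  have sa: "sigma_algebra Q (sigma_sets Q gens)"
    by (rule sigma_algebra_sigma_sets) (auto simp: gens_def)
  interpret sa: sigma_algebra Q "sigma_sets Q gens" by (rule sa)
  have contX: "continuous_map X X (\<lambda>u. cmp u \<beta>)" if "\<beta> \<in> G A0" for \<beta>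
    using cont that X_def by simp
  have topX: "topspace X = Hom A0 S" using top X_def by simp
  have open_img: "q ` Ou \<in> sigma_sets Q gens" if Ou: "openin X Ou" for Ou
  proof -
    have Osub: "Ou \<subseteq> Hom A0 S" using openin_subset[OF Ou] topX by simp
    have pre: "{f \<in> Hom A0 S. q f \<in> q ` Ou} = (\<Union>\<beta>\<in>G A0. {f \<in> topspace X. cmp f \<beta> \<in> Ou})"
    proof (intro equalityI subsetI)
      fix f assume "f \<in> {f \<in> Hom A0 S. q f \<in> q ` Ou}"
      then obtain o' where f: "f \<in> Hom A0 S" and o': "o' \<in> Ou" "q f = q o'" by auto
      then obtain \<beta> where "\<beta> \<in> G A0" "o' = cmp f \<beta>"
        using gclass_eq_iff[OF f, of o'] Osub unfolding q_def by auto
      then show "f \<in> (\<Union>\<beta>\<in>G A0. {f \<in> topspace X. cmp f \<beta> \<in> Ou})" using f o' topX by auto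
    next
      fix f assume "f \<in> (\<Union>\<beta>\<in>G A0. {f \<in> topspace X. cmp f \<beta> \<in> Ou})"
      then obtain \<beta> where b: "\<beta> \<in> G A0" "f \<in> Hom A0 S" "cmp f \<beta> \<in> Ou" using topX by auto
      then have eq: "q (cmp f \<beta>) = q f" unfolding q_def using gclass_comp[OF b(2) b(1)] by simp
      have "q f \<in> q ` Ou" using eq b(3) by (metis image_eqI)
      then show "f \<in> {f \<in> Hom A0 S. q f \<in> q ` Ou}" using b(2) by simp
    qed
    have "openin X (\<Union>\<beta>\<in>G A0. {f \<in> topspace X. cmp f \<beta> \<in> Ou})"
      apply (rule openin_Union)
      using openin_continuous_map_preimage[OF contX Ou] by auto
    then have "q ` Ou \<in> gens" unfolding gens_def using pre Osub Qeq by auto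
    then show ?thesis by auto
  qed
  have small_img: "q ` (E \<inter> V) \<in> sigma_sets Q gens"
    if V: "openin X V" "inj_on q V" and E: "E \<in> borel_sets X" for V E
    using E unfolding borel_sets_def
  proof (induction rule: sigma_sets.induct)
    case (Basic a)
    then have "openin X (a \<inter> V)" using V(1) by (simp add: openin_Int)
    then show ?case using open_img by simp
  next
    case Empty
    then show ?case by (simp add: sigma_sets.Empty)
  next
    case (Compl a)
    have "V \<subseteq> topspace X" using openin_subset[OF V(1)] .
    then have "(topspace X - a) \<inter> V = V - (a \<inter> V)" by blast
    then have "q ` ((topspace X - a) \<inter> V) = q ` V - q ` (a \<inter> V)"
      using inj_on_image_set_diff[OF V(2), of V "a \<inter> V"] by simp
    then show ?case using Compl open_img[OF V(1)] sa.Diff by (metis)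
  next
    case (Union a)
    have "q ` ((\<Union>i. a i) \<inter> V) = (\<Union>i. q ` (a i \<inter> V))" by auto
    then show ?case using Union sigma_sets.Union by metis
  qed
  have nbhd: "\<exists>V. openin X V \<and> u \<in> V \<and> inj_on q V" if u: "u \<in> Hom A0 S" for u
  proof -
    let ?I = "G A0 - {ident A0}"
    have ne: "u \<noteq> cmp u \<beta>" if b: "\<beta> \<in> ?I" for \<beta>
    proof
      assume "u = cmp u \<beta>"
      then have "cmp u (ident A0) = cmp u \<beta>" using ident_right[OF u] by simp
      then show False using cancel[OF u ident_hom[OF A0] G_hom[OF A0]] b by auto
    qed
    have "\<forall>\<beta>\<in>?I. \<exists>P R. openin X P \<and> openin X R \<and> u \<in> P \<and> cmp u \<beta> \<in> R \<and> disjnt P R"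
    proof
      fix \<beta> assume b: "\<beta> \<in> ?I"
      have "cmp u \<beta> \<in> Hom A0 S" using comp_hom[OF G_hom[OF A0] u] b by auto
      then show "\<exists>P R. openin X P \<and> openin X R \<and> u \<in> P \<and> cmp u \<beta> \<in> R \<and> disjnt P R"
        using haus ne[OF b] u topX unfolding Hausdorff_space_def X_def by auto
    qed
    then obtain P where "\<forall>\<beta>\<in>?I. \<exists>R. openin X (P \<beta>) \<and> openin X R \<and> u \<in> P \<beta> \<and> cmp u \<beta> \<in> R \<and> disjnt (P \<beta>) R"
      by (rule bchoice[elim_format]) blast
    then obtain R where "\<forall>\<beta>\<in>?I. openin X (P \<beta>) \<and> openin X (R \<beta>) \<and> u \<in> P \<beta> \<and> cmp u \<beta> \<in> R \<beta> \<and> disjnt (P \<beta>) (R \<beta>)"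
      by (rule bchoice[elim_format]) blast
    then have PR: "\<And>\<beta>. \<beta> \<in> ?I \<Longrightarrow> openin X (P \<beta>) \<and> openin X (R \<beta>) \<and> u \<in> P \<beta>
        \<and> cmp u \<beta> \<in> R \<beta> \<and> disjnt (P \<beta>) (R \<beta>)"
      by blast
    define V where "V = topspace X \<inter> \<Inter>((\<lambda>\<beta>. {v \<in> topspace X. v \<in> P \<beta> \<and> cmp v \<beta> \<in> R \<beta>}) ` ?I)"
    have "openin X V" unfolding V_def
    proof (rule openin_Int_Inter)
      show "finite ((\<lambda>\<beta>. {v \<in> topspace X. v \<in> P \<beta> \<and> cmp v \<beta> \<in> R \<beta>}) ` ?I)" using finG by auto
    next
      fix Y assume "Y \<in> (\<lambda>\<beta>. {v \<in> topspace X. v \<in> P \<beta> \<and> cmp v \<beta> \<in> R \<beta>}) ` ?I"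
      then obtain \<beta> where b: "\<beta> \<in> ?I" "Y = {v \<in> topspace X. v \<in> P \<beta> \<and> cmp v \<beta> \<in> R \<beta>}" by auto
      have bG: "\<beta> \<in> G A0" using b(1) by simp
      have o1: "openin X (P \<beta>)" and o2: "openin X (R \<beta>)" using PR[OF b(1)] by auto
      have "Y = P \<beta> \<inter> {v \<in> topspace X. cmp v \<beta> \<in> R \<beta>}" using b(2) openin_subset[OF o1] by auto
      then show "openin X Y"
        using openin_Int[OF o1 openin_continuous_map_preimage[OF contX[OF bG] o2]] by simp
    qed simp
    moreover have "u \<in> V" unfolding V_def using PR u topX by auto
    moreover have "inj_on q V"
    proof (rule inj_onI)
      fix v1 v2 assume v: "v1 \<in> V" "v2 \<in> V" "q v1 = q v2"
      have vh: "v1 \<in> Hom A0 S" "v2 \<in> Hom A0 S" using v topX V_def by auto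
      obtain \<beta> where b: "\<beta> \<in> G A0" "v2 = cmp v1 \<beta>"
        using gclass_eq_iff[OF vh(1) vh(2)] v(3) unfolding q_def by auto
      show "v1 = v2"
      proof (cases "\<beta> = ident A0")
        case True then show ?thesis using b ident_right[OF vh(1)] by simp
      next
        case False
        then have bI: "\<beta> \<in> ?I" using b by auto
        have "v2 \<in> P \<beta>" "cmp v1 \<beta> \<in> R \<beta>" using v(1,2) bI unfolding V_def by auto
        then show ?thesis using PR[OF bI] b(2) by (auto simp: disjnt_iff)
      qed
    qed
    ultimately show ?thesis by blast
  qed
  obtain \<B> where B: "countable \<B>" "\<forall>V\<in>\<B>. openin X V"
    "\<forall>U x. openin X U \<and> x \<in> U \<longrightarrow> (\<exists>V\<in>\<B>. x \<in> V \<and> V \<subseteq> U)"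
    using sc unfolding second_countable_def X_def by blast
  define EE where "EE = {u \<in> Hom A0 S. q u \<in> W}"
  have EEb: "EE \<in> borel_sets X" using E unfolding EE_def X_def q_def .
  have Weq: "W = (\<Union>V\<in>{V\<in>\<B>. inj_on q V}. q ` (EE \<inter> V))"
  proof (intro equalityI subsetI)
    fix c assume c: "c \<in> W"
    then obtain u where u: "u \<in> Hom A0 S" "c = q u" using W Qeq Q_def by auto
    obtain V where V: "openin X V" "u \<in> V" "inj_on q V" using nbhd[OF u(1)] by blast
    obtain V' where V': "V' \<in> \<B>" "u \<in> V'" "V' \<subseteq> V" using B(3) V by blast
    have "inj_on q V'" using V(3) V'(3) inj_on_subset by blast
    moreover have "u \<in> EE \<inter> V'" using u c V' EE_def by auto
    ultimately show "c \<in> (\<Union>V\<in>{V\<in>\<B>. inj_on q V}. q ` (EE \<inter> V))" using V' u by blast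
  next
    fix c assume "c \<in> (\<Union>V\<in>{V\<in>\<B>. inj_on q V}. q ` (EE \<inter> V))"
    then show "c \<in> W" unfolding EE_def by auto
  qed
  have "(\<Union>V\<in>{V\<in>\<B>. inj_on q V}. q ` (EE \<inter> V)) \<in> sigma_sets Q gens"
    apply (rule sigma_algebra.countable_UN'[OF sa])
    using B(1) apply simp
    using small_img B(2) EEb by auto
  then show ?thesis using Weq Sig by simp
qed

end


definition Psmall where
  "Psmall Mor dm cd cmp G DOb A = (\<lambda>n.
     \<forall>k::nat. \<forall>B\<in>DOb. \<exists>C\<in>DOb. \<forall>(col :: 'm set \<Rightarrow> nat).
       (\<forall>c\<in>binom Mor dm cd cmp G C A. col c < k) \<longrightarrow>
       (\<exists>w\<in>hom Mor dm cd B C. card (col ` wbinom Mor dm cd cmp G w B A) \<le> n))"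

definition Pbig where
  "Pbig Mor dm cd cmp T G X S = (\<lambda>n.
     \<forall>k::nat. k \<ge> 2 \<longrightarrow> (\<forall>(col :: 'm set \<Rightarrow> nat).
       (\<forall>c\<in>binom Mor dm cd cmp G S X. col c < k) \<longrightarrow>
       (\<forall>i<k. {c \<in> binom Mor dm cd cmp G S X. col c = i} \<in> binom_borel Mor dm cd cmp T G S X) \<longrightarrow>
       (\<exists>w\<in>hom Mor dm cd S S. card (col ` wbinom Mor dm cd cmp G w S X) \<le> n)))"

lemma small_eq: "small_ramsey_degree Mor dm cd cmp G DOb A = least_pos_or_inf (Psmall Mor dm cd cmp G DOb A)"
  unfolding small_ramsey_degree_def Psmall_def by (rule refl)

lemma big_eq: "big_ramsey_degree Mor dm cd cmp T G X S = least_pos_or_inf (Pbig Mor dm cd cmp T G X S)"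
  unfolding big_ramsey_degree_def Pbig_def by (rule refl)

locale ctx2 = ctx Ob Mor dm cd cmp ident G
  for Ob :: "'o set" and Mor :: "'m set" and dm cd :: "'m \<Rightarrow> 'o"
    and cmp :: "'m \<Rightarrow> 'm \<Rightarrow> 'm" and ident :: "'o \<Rightarrow> 'm" and G :: "'o \<Rightarrow> 'm set" +
  fixes T :: "'o \<Rightarrow> 'o \<Rightarrow> 'm topology"
    and DOb :: "'o set" and S :: 'o and F :: "'o \<Rightarrow> 'o" and \<Phi> :: "'o \<Rightarrow> 'm \<Rightarrow> 'm"
  assumes enriched: "Top_enriched Ob Mor dm cd cmp T"
    and hausdorff: "\<forall>A\<in>Ob. \<forall>B\<in>Ob. Hausdorff_space (T A B)"
    and DsubC: "DOb \<subseteq> Ob"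
    and Dfin: "skeletal_cat_finite_objects Mor dm cd cmp ident DOb"
    and S_in: "S \<in> Ob"
    and universal: "\<forall>D\<in>DOb. hom Mor dm cd D S \<noteq> {}"
    and approx: "approximable Mor dm cd cmp T DOb S F \<Phi>"
    and lcsc: "\<forall>A\<in>DOb. locally_compact_space (T A S) \<and> second_countable (T A S)
                        \<and> Hausdorff_space (T A S)"
begin

lemma D_Ob: "A \<in> DOb \<Longrightarrow> A \<in> Ob" using DsubC by blast

lemmas ap = approx[unfolded approximable_def]
lemmas ap1 = ap[THEN conjunct1]
lemmas ap2 = ap[THEN conjunct2, THEN conjunct1]
lemmas ap3 = ap[THEN conjunct2, THEN conjunct2, THEN conjunct1]
lemmas ap4 = ap[THEN conjunct2, THEN conjunct2, THEN conjunct2]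
lemmas df = Dfin[unfolded skeletal_cat_finite_objects_def]
lemmas df4 = df[THEN conjunct2, THEN conjunct2, THEN conjunct2, THEN conjunct1]
lemmas df5 = df[THEN conjunct2, THEN conjunct2, THEN conjunct2, THEN conjunct2]
lemmas en1 = enriched[unfolded Top_enriched_def, THEN conjunct1]
lemmas en2 = enriched[unfolded Top_enriched_def, THEN conjunct2]

lemma F_D: "A \<in> DOb \<Longrightarrow> F A \<in> DOb" using ap1 by (rule bspec)

lemma countD: "countable DOb" by (rule df4)

lemma hom_fin: assumes "A \<in> DOb" "B \<in> DOb" shows "finite (Hom A B)"
proof -
  have "finite {f \<in> Mor. dm f \<in> DOb \<and> cd f = B}"
    using df5 assms(2) by (rule bspec)
  moreover have "Hom A B \<subseteq> {f \<in> Mor. dm f \<in> DOb \<and> cd f = B}"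
    using assms(1) unfolding hom_def by blast
  ultimately show ?thesis using finite_subset by blast
qed

lemma G_fin: assumes "A \<in> DOb" shows "finite (G A)"
proof -
  have "G A \<subseteq> Hom A A" using G_hom D_Ob[OF assms] by blast
  then show ?thesis using hom_fin[OF assms assms] finite_subset by blast
qed

lemma G_card_pos: assumes "A \<in> DOb" shows "card (G A) > 0"
proof -
  have "G A \<noteq> {}" using G_id[OF D_Ob[OF assms]] by blast
  then show ?thesis using G_fin[OF assms] by (simp add: card_gt_0_iff)
qed

lemma top_hom: "A \<in> Ob \<Longrightarrow> B \<in> Ob \<Longrightarrow> topspace (T A B) = Hom A B"
  using en1 by blast

lemma R_cont:
  assumes A: "A \<in> Ob" and X: "X \<in> Ob" and b: "\<beta> \<in> G A"
  shows "continuous_map (T A X) (T A X) (\<lambda>u. cmp u \<beta>)"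
proof -
  have c: "continuous_map (prod_topology (T A X) (T A A)) (T A X) (\<lambda>(g, f). cmp g f)"
    using en2 A X by blast
  have bt: "\<beta> \<in> topspace (T A A)" using top_hom[OF A A] G_hom[OF A b] by simp
  have p: "continuous_map (T A X) (prod_topology (T A X) (T A A)) (\<lambda>x. (id x, \<beta>))"
    by (rule continuous_map_pairedI) (simp_all add: bt)
  have "continuous_map (T A X) (T A X) ((\<lambda>(g, f). cmp g f) \<circ> (\<lambda>x. (id x, \<beta>)))"
    by (rule continuous_map_compose[OF p c])
  moreover have "((\<lambda>(g, f). cmp g f) \<circ> (\<lambda>x. (id x, \<beta>))) = (\<lambda>u. cmp u \<beta>)" by (simp add: o_def)
  ultimately show ?thesis by simp
qed

lemma Psmall_0:
  assumes A: "A \<in> DOb" shows "\<not> Psmall Mor dm cd cmp G DOb A 0"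
proof
  assume h: "Psmall Mor dm cd cmp G DOb A 0"
  have "\<exists>C\<in>DOb. \<forall>(col :: 'm set \<Rightarrow> nat).
       (\<forall>c\<in>binom Mor dm cd cmp G C A. col c < 1) \<longrightarrow>
       (\<exists>w\<in>Hom A C. card (col ` wbinom Mor dm cd cmp G w A A) \<le> 0)"
  proof -
    have "\<forall>k::nat. \<forall>B\<in>DOb. \<exists>C\<in>DOb. \<forall>(col :: 'm set \<Rightarrow> nat).
       (\<forall>c\<in>binom Mor dm cd cmp G C A. col c < k) \<longrightarrow>
       (\<exists>w\<in>Hom B C. card (col ` wbinom Mor dm cd cmp G w B A) \<le> 0)"
      using h unfolding Psmall_def .
    then have "\<forall>B\<in>DOb. \<exists>C\<in>DOb. \<forall>(col :: 'm set \<Rightarrow> nat).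
       (\<forall>c\<in>binom Mor dm cd cmp G C A. col c < 1) \<longrightarrow>
       (\<exists>w\<in>Hom B C. card (col ` wbinom Mor dm cd cmp G w B A) \<le> 0)"
      by (rule spec)
    then show ?thesis by (rule bspec[OF _ A])
  qed
  then obtain C where C: "C \<in> DOb" and P: "\<forall>(col :: 'm set \<Rightarrow> nat).
       (\<forall>c\<in>binom Mor dm cd cmp G C A. col c < 1) \<longrightarrow>
       (\<exists>w\<in>Hom A C. card (col ` wbinom Mor dm cd cmp G w A A) \<le> 0)"
    by (rule bexE)
  have "\<forall>c\<in>binom Mor dm cd cmp G C A. (\<lambda>_. 0::nat) c < 1" by simp
  then have "\<exists>w\<in>Hom A C. card ((\<lambda>_. 0::nat) ` wbinom Mor dm cd cmp G w A A) \<le> 0"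
    using P[rule_format, of "\<lambda>_. 0"] by blast
  then obtain w where w: "w \<in> Hom A C" and c: "card ((\<lambda>_. 0::nat) ` wbinom Mor dm cd cmp G w A A) \<le> 0"
    by (rule bexE)
  have "ident A \<in> Hom A A" using ident_hom D_Ob[OF A] by blast
  then have ne: "wbinom Mor dm cd cmp G w A A \<noteq> {}" unfolding wbinom_def by blast
  have "finite (wbinom Mor dm cd cmp G w A A)" unfolding wbinom_def using hom_fin[OF A A] by simp
  have "card ((\<lambda>_. 0::nat) ` wbinom Mor dm cd cmp G w A A) > 0" using ne by (simp add: image_constant_conv)
  then show False using c by simp
qed

lemma main_P:
  assumes A: "A \<in> DOb" and PB: "Pbig Mor dm cd cmp T G (F A) S N"
    and mN: "N * card (G (F A)) < card (G A) * Suc m"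
  shows "Psmall Mor dm cd cmp G DOb A m"
proof (rule ccontr)
  assume neg: "\<not> Psmall Mor dm cd cmp G DOb A m"
  have "\<exists>k::nat. \<exists>B\<in>DOb. \<forall>C\<in>DOb. \<exists>(col :: 'm set \<Rightarrow> nat).
       (\<forall>c\<in>binom Mor dm cd cmp G C A. col c < k) \<and>
       (\<forall>w\<in>Hom B C. m < card (col ` wbinom Mor dm cd cmp G w B A))"
    using neg unfolding Psmall_def by (simp add: not_le)
  then obtain k B where B: "B \<in> DOb" and bad: "\<forall>C\<in>DOb. \<exists>(col :: 'm set \<Rightarrow> nat).
       (\<forall>c\<in>binom Mor dm cd cmp G C A. col c < k) \<and>
       (\<forall>w\<in>Hom B C. m < card (col ` wbinom Mor dm cd cmp G w B A))"
    by blast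
  obtain colC where colC: "\<forall>C\<in>DOb. (\<forall>c\<in>binom Mor dm cd cmp G C A. colC C c < k) \<and>
       (\<forall>w\<in>Hom B C. m < card (colC C ` wbinom Mor dm cd cmp G w B A))"
    using bchoice[OF bad] by blast
  have AOb: "A \<in> Ob" using D_Ob[OF A] .
  have FAD: "F A \<in> DOb" using F_D[OF A] .
  have FAOb: "F A \<in> Ob" using D_Ob[OF FAD] .
  define qA where "qA = gclass cmp (G A)"
  define qF where "qF = gclass cmp (G (F A))"
  define r where "r = (\<lambda>c::'m set. SOME f. f \<in> c)"
  define \<rho> where "\<rho> = (\<lambda>h. SOME \<alpha>. \<alpha> \<in> G A \<and> cmp (r (qA h)) \<alpha> = h)"
  obtain \<iota> :: "'m \<Rightarrow> nat" where \<iota>: "inj_on \<iota> (G A)"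
    using finite_imp_inj_to_nat_seg[OF G_fin[OF A]] by blast
  define chi where "chi = (\<lambda>h. prod_encode (colC (cd h) (qA h), \<iota> (\<rho> h)))"
  define \<gamma> where "\<gamma> = (\<lambda>u. chi (\<Phi> A u))"
  define Rg where "Rg = prod_encode ` ({..<k} \<times> \<iota> ` G A)"
  define \<delta> where "\<delta> = (\<lambda>c. set_encode (\<gamma> ` c))"
  define K where "K = Suc (Suc (Max (set_encode ` Pow Rg)))"
  have finGA: "finite (G A)" using G_fin[OF A] .
  have finGF: "finite (G (F A))" using G_fin[OF FAD] .
  have finRg: "finite Rg" unfolding Rg_def using finGA by simp
  have r_spec: "r (qA h) \<in> qA h" if h: "h \<in> Hom A C" for h C
  proof -
    have "h \<in> qA h" unfolding qA_def using gclass_self[OF h] .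
    then show ?thesis unfolding r_def by (rule someI)
  qed
  have \<rho>_spec: "\<rho> h \<in> G A \<and> cmp (r (qA h)) (\<rho> h) = h" if h: "h \<in> Hom A C" for h C
  proof -
    obtain \<beta> where b: "\<beta> \<in> G A" "r (qA h) = cmp h \<beta>"
      using gclass_mem[OF h] r_spec[OF h] unfolding qA_def by blast
    obtain \<beta>' where b': "\<beta>' \<in> G A" "cmp \<beta> \<beta>' = ident A"
      using G_inv[OF AOb b(1)] by blast
    have "cmp (r (qA h)) \<beta>' = cmp (cmp h \<beta>) \<beta>'" using b(2) by simp
    also have "\<dots> = cmp h (cmp \<beta> \<beta>')"
      using assoc[OF G_hom[OF AOb b'(1)] G_hom[OF AOb b(1)] h] by simp
    also have "\<dots> = h" using b'(2) ident_right[OF h] by simp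
    finally have "\<beta>' \<in> G A \<and> cmp (r (qA h)) \<beta>' = h" using b'(1) by simp
    then show ?thesis unfolding \<rho>_def by (rule someI)
  qed
  have \<Phi>_cod: "\<exists>C\<in>DOb. \<Phi> A u \<in> Hom A C" if u: "u \<in> Hom (F A) S" for u
  proof -
    have "\<Phi> A u \<in> (\<Union>C\<in>DOb. Hom A C)" using ap2 A u by blast
    then show ?thesis by blast
  qed
  have chi_Rg: "chi h \<in> Rg" if C: "C \<in> DOb" and h: "h \<in> Hom A C" for C h
  proof -
    have cdh: "cd h = C" using homD[OF h] by simp
    have "qA h \<in> binom Mor dm cd cmp G C A" unfolding binom_def qA_def using h by blast
    then have "colC C (qA h) < k" using colC C by blast
    moreover have "\<rho> h \<in> G A" using \<rho>_spec[OF h] by blast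
    ultimately show ?thesis unfolding chi_def Rg_def cdh by blast
  qed
  have \<gamma>_Rg: "\<gamma> u \<in> Rg" if u: "u \<in> Hom (F A) S" for u
    using \<Phi>_cod[OF u] chi_Rg unfolding \<gamma>_def by blast
  have qF_img: "\<gamma> ` qF u = (\<lambda>\<beta>. \<gamma> (cmp u \<beta>)) ` G (F A)" for u
    unfolding qF_def gclass_def by (simp add: image_image)
  have qF_Rg: "\<gamma> ` qF u \<subseteq> Rg" if u: "u \<in> Hom (F A) S" for u
  proof
    fix y assume "y \<in> \<gamma> ` qF u"
    then obtain x where x: "x \<in> qF u" "y = \<gamma> x" by blast
    have "x \<in> Hom (F A) S" using gclass_hom[OF u] x(1) unfolding qF_def by blast
    then show "y \<in> Rg" using \<gamma>_Rg x(2) by simp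
  qed
  have binom_elem: "\<exists>u\<in>Hom (F A) S. c = qF u" if c: "c \<in> binom Mor dm cd cmp G S (F A)" for c
    using c unfolding binom_def qF_def by blast
  have K2: "K \<ge> 2" unfolding K_def by simp
  have \<delta>_bound: "\<delta> c < K" if c: "c \<in> binom Mor dm cd cmp G S (F A)" for c
  proof -
    obtain u where u: "u \<in> Hom (F A) S" "c = qF u" using binom_elem[OF c] by blast
    have "\<gamma> ` c \<in> Pow Rg" using qF_Rg[OF u(1)] u(2) by simp
    then have "\<delta> c \<in> set_encode ` Pow Rg" unfolding \<delta>_def by blast
    then have "\<delta> c \<le> Max (set_encode ` Pow Rg)" using finRg by simp
    then show ?thesis unfolding K_def by simp
  qed
  let ?\<Omega> = "Hom (F A) S"
  let ?X = "T (F A) S"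
  have topX: "topspace ?X = ?\<Omega>" using top_hom[OF FAOb S_in] .
  interpret M: sigma_algebra ?\<Omega> "borel_sets ?X" using borel_sa[of ?X] topX by simp
  have \<Gamma>: "{u \<in> ?\<Omega>. \<gamma> u = j} \<in> borel_sets ?X" for j
  proof -
    have eq: "{u \<in> ?\<Omega>. \<gamma> u = j} = (\<Union>C\<in>DOb. {u \<in> ?\<Omega>. \<Phi> A u \<in> {h \<in> Hom A C. chi h = j}})"
    proof (intro equalityI subsetI)
      fix u assume u: "u \<in> {u \<in> ?\<Omega>. \<gamma> u = j}"
      then obtain C where "C \<in> DOb" "\<Phi> A u \<in> Hom A C" using \<Phi>_cod by blast
      then show "u \<in> (\<Union>C\<in>DOb. {u \<in> ?\<Omega>. \<Phi> A u \<in> {h \<in> Hom A C. chi h = j}})"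
        using u unfolding \<gamma>_def by blast
    next
      fix u assume "u \<in> (\<Union>C\<in>DOb. {u \<in> ?\<Omega>. \<Phi> A u \<in> {h \<in> Hom A C. chi h = j}})"
      then show "u \<in> {u \<in> ?\<Omega>. \<gamma> u = j}" unfolding \<gamma>_def by blast
    qed
    have each: "{u \<in> ?\<Omega>. \<Phi> A u \<in> {h \<in> Hom A C. chi h = j}} \<in> borel_sets ?X" if C: "C \<in> DOb" for C
    proof -
      have COb: "C \<in> Ob" using D_Ob[OF C] .
      have "openin (T A C) {h \<in> Hom A C. chi h = j}"
      proof (rule finite_Hausdorff_open)
        show "Hausdorff_space (T A C)" using hausdorff AOb COb by blast
        show "finite (topspace (T A C))" using top_hom[OF AOb COb] hom_fin[OF A C] by simp
        show "{h \<in> Hom A C. chi h = j} \<subseteq> topspace (T A C)" using top_hom[OF AOb COb] by blast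
      qed
      then show ?thesis using ap3 A C by blast
    qed
    show ?thesis unfolding eq by (rule M.countable_UN'[OF countD]) (use each in blast)
  qed
  have P: "{u \<in> ?\<Omega>. \<gamma> (cmp u \<beta>) = j} \<in> borel_sets ?X" if b: "\<beta> \<in> G (F A)" for \<beta> j
  proof -
    have m1: "{x \<in> topspace ?X. cmp x \<beta> \<in> {u \<in> ?\<Omega>. \<gamma> u = j}} \<in> borel_sets ?X"
      by (rule borel_preimage[OF R_cont[OF FAOb S_in b] \<Gamma>])
    have eqP: "{x \<in> topspace ?X. cmp x \<beta> \<in> {u \<in> ?\<Omega>. \<gamma> u = j}} = {u \<in> ?\<Omega>. \<gamma> (cmp u \<beta>) = j}"
    proof -
      have cl: "cmp x \<beta> \<in> ?\<Omega>" if "x \<in> ?\<Omega>" for x using comp_hom[OF G_hom[OF FAOb b] that] .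
      show ?thesis unfolding topX using cl by auto
    qed
    show ?thesis using m1 unfolding eqP .
  qed
  have Y: "{u \<in> ?\<Omega>. \<gamma> ` qF u = Z} \<in> borel_sets ?X" if Z: "Z \<subseteq> Rg" for Z
  proof -
    define UB where "UB = (\<lambda>z. (\<Union>\<beta>\<in>G (F A). {u \<in> ?\<Omega>. \<gamma> (cmp u \<beta>) = z}))"
    define L where "L = (\<lambda>z. if z \<in> Z then UB z else ?\<Omega> - UB z)"
    have UBb: "UB z \<in> borel_sets ?X" for z
      unfolding UB_def by (rule M.finite_UN[OF finGF]) (rule P)
    have Lb: "L z \<in> borel_sets ?X" for z
    proof (cases "z \<in> Z")
      case True then show ?thesis unfolding L_def using UBb by simp
    next
      case False then show ?thesis unfolding L_def using M.Diff[OF M.top UBb] by simp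
    qed
    have UBmem: "u \<in> UB z \<longleftrightarrow> (\<exists>\<beta>\<in>G (F A). \<gamma> (cmp u \<beta>) = z)" if u: "u \<in> ?\<Omega>" for u z
      unfolding UB_def using u by blast
    have Lmem: "u \<in> L z \<longleftrightarrow> (z \<in> Z \<longleftrightarrow> (\<exists>\<beta>\<in>G (F A). \<gamma> (cmp u \<beta>) = z))" if u: "u \<in> ?\<Omega>" for u z
    proof (cases "z \<in> Z")
      case True then show ?thesis unfolding L_def using UBmem[OF u] by simp
    next
      case False then show ?thesis unfolding L_def using UBmem[OF u] u by simp
    qed
    have iff: "\<gamma> ` qF u = Z \<longleftrightarrow> (\<forall>z\<in>Rg. (z \<in> Z \<longleftrightarrow> (\<exists>\<beta>\<in>G (F A). \<gamma> (cmp u \<beta>) = z)))"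
      if u: "u \<in> ?\<Omega>" for u
    proof -
      have sub: "(\<lambda>\<beta>. \<gamma> (cmp u \<beta>)) ` G (F A) \<subseteq> Rg" using qF_Rg[OF u] qF_img[of u] by simp
      have mem: "y \<in> (\<lambda>\<beta>. \<gamma> (cmp u \<beta>)) ` G (F A) \<longleftrightarrow> (\<exists>\<beta>\<in>G (F A). \<gamma> (cmp u \<beta>) = y)" for y
        by blast
      show ?thesis
      proof
        assume "\<gamma> ` qF u = Z"
        then have "Z = (\<lambda>\<beta>. \<gamma> (cmp u \<beta>)) ` G (F A)" using qF_img[of u] by simp
        then show "\<forall>z\<in>Rg. (z \<in> Z \<longleftrightarrow> (\<exists>\<beta>\<in>G (F A). \<gamma> (cmp u \<beta>) = z))" using mem by simp
      next
        assume h: "\<forall>z\<in>Rg. (z \<in> Z \<longleftrightarrow> (\<exists>\<beta>\<in>G (F A). \<gamma> (cmp u \<beta>) = z))"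
        have "(\<lambda>\<beta>. \<gamma> (cmp u \<beta>)) ` G (F A) = Z"
        proof (intro equalityI subsetI)
          fix y assume y: "y \<in> (\<lambda>\<beta>. \<gamma> (cmp u \<beta>)) ` G (F A)"
          have yR: "y \<in> Rg" using sub y by (rule subsetD)
          have "\<exists>\<beta>\<in>G (F A). \<gamma> (cmp u \<beta>) = y" using y mem by simp
          then show "y \<in> Z" using h yR by simp
        next
          fix y assume y: "y \<in> Z"
          have yR: "y \<in> Rg" using Z y by (rule subsetD)
          have "\<exists>\<beta>\<in>G (F A). \<gamma> (cmp u \<beta>) = y" using h yR y by simp
          then show "y \<in> (\<lambda>\<beta>. \<gamma> (cmp u \<beta>)) ` G (F A)" using mem by simp
        qed
        then show "\<gamma> ` qF u = Z" using qF_img[of u] by simp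
      qed
    qed
    have eq: "{u \<in> ?\<Omega>. \<gamma> ` qF u = Z} = ?\<Omega> \<inter> (\<Inter>z\<in>Rg. L z)"
    proof (intro equalityI subsetI)
      fix u assume u: "u \<in> {u \<in> ?\<Omega>. \<gamma> ` qF u = Z}"
      then have uO: "u \<in> ?\<Omega>" by simp
      have "\<forall>z\<in>Rg. u \<in> L z" using u iff[OF uO] Lmem[OF uO] by simp
      then show "u \<in> ?\<Omega> \<inter> (\<Inter>z\<in>Rg. L z)" using uO by simp
    next
      fix u assume u: "u \<in> ?\<Omega> \<inter> (\<Inter>z\<in>Rg. L z)"
      then have uO: "u \<in> ?\<Omega>" by simp
      have "\<forall>z\<in>Rg. u \<in> L z" using u by simp
      then have "\<gamma> ` qF u = Z" using iff[OF uO] Lmem[OF uO] by simp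
      then show "u \<in> {u \<in> ?\<Omega>. \<gamma> ` qF u = Z}" using uO by simp
    qed
    show ?thesis
    proof (cases "Rg = {}")
      case True
      then have "?\<Omega> \<inter> (\<Inter>z\<in>Rg. L z) = ?\<Omega>" by simp
      then show ?thesis unfolding eq using M.top by simp
    next
      case False
      have "(\<Inter>z\<in>Rg. L z) \<in> borel_sets ?X" by (rule M.finite_INT[OF finRg False]) (rule Lb)
      then show ?thesis unfolding eq using M.Int[OF M.top] by simp
    qed
  qed
  have Ei: "{u \<in> ?\<Omega>. \<delta> (qF u) = i} \<in> borel_sets ?X" for i
  proof -
    have eq: "{u \<in> ?\<Omega>. \<delta> (qF u) = i} = (\<Union>Z\<in>{Z \<in> Pow Rg. set_encode Z = i}. {u \<in> ?\<Omega>. \<gamma> ` qF u = Z})"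
    proof (intro equalityI subsetI)
      fix u assume u: "u \<in> {u \<in> ?\<Omega>. \<delta> (qF u) = i}"
      then have "\<gamma> ` qF u \<in> {Z \<in> Pow Rg. set_encode Z = i}" using qF_Rg unfolding \<delta>_def by blast
      then show "u \<in> (\<Union>Z\<in>{Z \<in> Pow Rg. set_encode Z = i}. {u \<in> ?\<Omega>. \<gamma> ` qF u = Z})" using u by blast
    next
      fix u assume "u \<in> (\<Union>Z\<in>{Z \<in> Pow Rg. set_encode Z = i}. {u \<in> ?\<Omega>. \<gamma> ` qF u = Z})"
      then show "u \<in> {u \<in> ?\<Omega>. \<delta> (qF u) = i}" unfolding \<delta>_def by blast
    qed
    have fin: "finite {Z \<in> Pow Rg. set_encode Z = i}" using finRg by simp
    show ?thesis unfolding eq by (rule M.finite_UN[OF fin]) (use Y in blast)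
  qed
  have fib: "{c \<in> binom Mor dm cd cmp G S (F A). \<delta> c = i} \<in> binom_borel Mor dm cd cmp T G S (F A)" for i
  proof (rule quot_borel[where T=T, OF FAOb S_in topX])
    show "Hausdorff_space ?X" using lcsc FAD by blast
    show "second_countable ?X" using lcsc FAD by blast
    show "\<forall>\<beta>\<in>G (F A). continuous_map ?X ?X (\<lambda>u. cmp u \<beta>)" using R_cont[OF FAOb S_in] by blast
    show "finite (G (F A))" using finGF .
    show "{c \<in> binom Mor dm cd cmp G S (F A). \<delta> c = i} \<subseteq> binom Mor dm cd cmp G S (F A)" by blast
    have "{u \<in> ?\<Omega>. gclass cmp (G (F A)) u \<in> {c \<in> binom Mor dm cd cmp G S (F A). \<delta> c = i}}
        = {u \<in> ?\<Omega>. \<delta> (qF u) = i}"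
      unfolding qF_def binom_def by blast
    then show "{u \<in> ?\<Omega>. gclass cmp (G (F A)) u \<in> {c \<in> binom Mor dm cd cmp G S (F A). \<delta> c = i}}
        \<in> borel_sets ?X" using Ei by simp
  qed
  have PB1: "\<forall>k::nat. k \<ge> 2 \<longrightarrow> (\<forall>(col :: 'm set \<Rightarrow> nat).
       (\<forall>c\<in>binom Mor dm cd cmp G S (F A). col c < k) \<longrightarrow>
       (\<forall>i<k. {c \<in> binom Mor dm cd cmp G S (F A). col c = i} \<in> binom_borel Mor dm cd cmp T G S (F A)) \<longrightarrow>
       (\<exists>w\<in>Hom S S. card (col ` wbinom Mor dm cd cmp G w S (F A)) \<le> N))"
    using PB unfolding Pbig_def .
  have PB2: "\<forall>(col :: 'm set \<Rightarrow> nat).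
       (\<forall>c\<in>binom Mor dm cd cmp G S (F A). col c < K) \<longrightarrow>
       (\<forall>i<K. {c \<in> binom Mor dm cd cmp G S (F A). col c = i} \<in> binom_borel Mor dm cd cmp T G S (F A)) \<longrightarrow>
       (\<exists>w\<in>Hom S S. card (col ` wbinom Mor dm cd cmp G w S (F A)) \<le> N)"
    using mp[OF spec[OF PB1, of K] K2] .
  have PB3: "(\<forall>c\<in>binom Mor dm cd cmp G S (F A). \<delta> c < K) \<longrightarrow>
       (\<forall>i<K. {c \<in> binom Mor dm cd cmp G S (F A). \<delta> c = i} \<in> binom_borel Mor dm cd cmp T G S (F A)) \<longrightarrow>
       (\<exists>w\<in>Hom S S. card (\<delta> ` wbinom Mor dm cd cmp G w S (F A)) \<le> N)"
    using PB2 by (rule spec)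
  have "\<exists>w\<in>Hom S S. card (\<delta> ` wbinom Mor dm cd cmp G w S (F A)) \<le> N"
  proof -
    have "\<forall>c\<in>binom Mor dm cd cmp G S (F A). \<delta> c < K" using \<delta>_bound by blast
    moreover have "\<forall>i<K. {c \<in> binom Mor dm cd cmp G S (F A). \<delta> c = i} \<in> binom_borel Mor dm cd cmp T G S (F A)"
      using fib by blast
    ultimately show ?thesis using PB3 by blast
  qed
  then obtain w where w: "w \<in> Hom S S" and wN: "card (\<delta> ` wbinom Mor dm cd cmp G w S (F A)) \<le> N"
    by blast
  have FBD: "F B \<in> DOb" using F_D[OF B] .
  obtain u0 where u0: "u0 \<in> Hom (F B) S" using universal FBD by blast
  define v where "v = cmp w u0"
  have v: "v \<in> Hom (F B) S" unfolding v_def using comp_hom[OF u0 w] .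
  obtain C where C: "C \<in> DOb" and z: "\<Phi> B v \<in> Hom B C"
  proof -
    have "\<Phi> B v \<in> (\<Union>C\<in>DOb. Hom B C)" using ap2 B v by blast
    then show ?thesis using that by blast
  qed
  define zz where "zz = \<Phi> B v"
  have zz: "zz \<in> Hom B C" using z zz_def by simp
  define Wc where "Wc = wbinom Mor dm cd cmp G w S (F A)"
  define U where "U = (\<lambda>c. \<gamma> ` c) ` Wc"
  have Wc_elem: "\<exists>x\<in>Hom (F A) S. c = qF x" if c: "c \<in> Wc" for c
  proof -
    obtain f where f: "f \<in> Hom (F A) S" "c = qF (cmp w f)"
      using c unfolding Wc_def wbinom_def qF_def by blast
    then show ?thesis using comp_hom[OF f(1) w] by blast
  qed
  have U_sub: "U \<subseteq> Pow Rg"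
  proof
    fix X assume "X \<in> U"
    then obtain c where c: "c \<in> Wc" "X = \<gamma> ` c" unfolding U_def by blast
    obtain x where x: "x \<in> Hom (F A) S" "c = qF x" using Wc_elem[OF c(1)] by blast
    show "X \<in> Pow Rg" using qF_Rg[OF x(1)] c(2) x(2) by simp
  qed
  have U_fin: "finite U" using U_sub finRg finite_subset by blast
  have U_elem_fin: "finite X" if "X \<in> U" for X using U_sub that finRg finite_subset by blast
  have cardU: "card U \<le> N"
  proof -
    have "\<delta> ` Wc = set_encode ` U" unfolding U_def \<delta>_def by (simp add: image_image)
    moreover have "inj_on set_encode U"
      using inj_on_subset[OF inj_on_set_encode] U_elem_fin by blast
    ultimately have "card (\<delta> ` Wc) = card U" by (simp add: card_image)
    then show ?thesis using wN Wc_def by simp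
  qed
  have Ucard: "card X \<le> card (G (F A))" if X: "X \<in> U" for X
  proof -
    obtain c where c: "c \<in> Wc" "X = \<gamma> ` c" using X unfolding U_def by blast
    obtain x where x: "x \<in> Hom (F A) S" "c = qF x" using Wc_elem[OF c(1)] by blast
    have fc: "finite c" using finGF x(2) unfolding qF_def gclass_def by simp
    have "card X \<le> card c" using c(2) card_image_le[OF fc] by simp
    also have "\<dots> \<le> card (G (F A))" using gclass_finite_card[OF finGF] x(2) unfolding qF_def by simp
    finally show ?thesis .
  qed
  have upper: "card (\<Union>U) \<le> N * card (G (F A))"
  proof -
    have "card (\<Union>U) \<le> sum card U" by (rule card_Union_le_sum_card)
    also have "\<dots> \<le> card U * card (G (F A))" using sum_bounded_above[of U card "card (G (F A))"] Ucard by simp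
    also have "\<dots> \<le> N * card (G (F A))" using cardU by simp
    finally show ?thesis .
  qed
  have incl: "chi ` (cmp zz ` Hom A B) \<subseteq> \<Union>U"
  proof
    fix y assume "y \<in> chi ` (cmp zz ` Hom A B)"
    then obtain f where f: "f \<in> Hom A B" "y = chi (cmp zz f)" by blast
    obtain f' where f': "f' \<in> Hom (F A) (F B)" "\<Phi> A (cmp v f') = cmp (\<Phi> B v) f"
      using ap4 A B f(1) v by blast
    have y: "y = \<gamma> (cmp v f')" unfolding \<gamma>_def using f(2) f'(2) zz_def by simp
    have u0f: "cmp u0 f' \<in> Hom (F A) S" using comp_hom[OF f'(1) u0] .
    have vf: "cmp v f' = cmp w (cmp u0 f')" unfolding v_def using assoc[OF f'(1) u0 w] by simp
    have cW: "qF (cmp w (cmp u0 f')) \<in> Wc" unfolding Wc_def wbinom_def qF_def using u0f by blast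
    have "cmp v f' \<in> qF (cmp w (cmp u0 f'))"
      using gclass_self[OF comp_hom[OF u0f w]] vf unfolding qF_def by simp
    then have "y \<in> \<gamma> ` qF (cmp w (cmp u0 f'))" using y by blast
    then show "y \<in> \<Union>U" using cW unfolding U_def by blast
  qed
  have finR: "finite (chi ` (cmp zz ` Hom A B))" using hom_fin[OF A B] by simp
  have finUU: "finite (\<Union>U)" using U_fin U_elem_fin by blast
  have le1: "card (chi ` (cmp zz ` Hom A B)) \<le> N * card (G (F A))"
    using card_mono[OF finUU incl] upper by simp
  define Cols where "Cols = colC C ` wbinom Mor dm cd cmp G zz B A"
  have mC: "m < card Cols" using colC C zz unfolding Cols_def by blast
  have finCols: "finite Cols" unfolding Cols_def wbinom_def using hom_fin[OF A B] by simp
  have incl2: "prod_encode ` (Cols \<times> \<iota> ` G A) \<subseteq> chi ` (cmp zz ` Hom A B)"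
  proof
    fix y assume "y \<in> prod_encode ` (Cols \<times> \<iota> ` G A)"
    then obtain f \<alpha> where f: "f \<in> Hom A B" and a: "\<alpha> \<in> G A"
      and y: "y = prod_encode (colC C (qA (cmp zz f)), \<iota> \<alpha>)"
      unfolding Cols_def wbinom_def qA_def by blast
    define h0 where "h0 = cmp zz f"
    have h0: "h0 \<in> Hom A C" unfolding h0_def using comp_hom[OF f zz] .
    define r0 where "r0 = r (qA h0)"
    obtain \<beta> where b: "\<beta> \<in> G A" "r0 = cmp h0 \<beta>"
      using gclass_mem[OF h0] r_spec[OF h0] unfolding r0_def qA_def by blast
    have r0: "r0 \<in> Hom A C" using b(2) comp_hom[OF G_hom[OF AOb b(1)] h0] by simp
    define h where "h = cmp r0 \<alpha>"
    have fb: "cmp f \<beta> \<in> Hom A B" using comp_hom[OF G_hom[OF AOb b(1)] f] .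
    have f2: "cmp (cmp f \<beta>) \<alpha> \<in> Hom A B" using comp_hom[OF G_hom[OF AOb a] fb] .
    have hz: "h = cmp zz (cmp (cmp f \<beta>) \<alpha>)"
    proof -
      have "h = cmp (cmp (cmp zz f) \<beta>) \<alpha>" unfolding h_def b(2) h0_def ..
      also have "cmp (cmp zz f) \<beta> = cmp zz (cmp f \<beta>)"
        using assoc[OF G_hom[OF AOb b(1)] f zz] by simp
      also have "cmp (cmp zz (cmp f \<beta>)) \<alpha> = cmp zz (cmp (cmp f \<beta>) \<alpha>)"
        using assoc[OF G_hom[OF AOb a] fb zz] by simp
      finally show ?thesis .
    qed
    have hC: "h \<in> Hom A C" unfolding h_def using comp_hom[OF G_hom[OF AOb a] r0] .
    have qh: "qA h = qA h0"
    proof -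
      have "qA h = qA r0" unfolding h_def qA_def using gclass_comp[OF r0 a] .
      also have "\<dots> = qA h0" unfolding b(2) qA_def using gclass_comp[OF h0 b(1)] .
      finally show ?thesis .
    qed
    have rh: "\<rho> h = \<alpha>"
    proof -
      have "\<rho> h \<in> G A" "cmp (r (qA h)) (\<rho> h) = h" using \<rho>_spec[OF hC] by auto
      then have "cmp r0 (\<rho> h) = cmp r0 \<alpha>" using qh unfolding r0_def h_def by simp
      then show ?thesis using cancel[OF r0 G_hom[OF AOb \<open>\<rho> h \<in> G A\<close>] G_hom[OF AOb a]] by simp
    qed
    have cdh: "cd h = C" using homD[OF hC] by simp
    have "chi h = y" unfolding chi_def cdh qh rh y h0_def ..
    moreover have "h \<in> cmp zz ` Hom A B" using hz f2 by blast
    ultimately show "y \<in> chi ` (cmp zz ` Hom A B)" by blast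
  qed
  have "card (prod_encode ` (Cols \<times> \<iota> ` G A)) = card Cols * card (G A)"
  proof -
    have "card (prod_encode ` (Cols \<times> \<iota> ` G A)) = card (Cols \<times> \<iota> ` G A)"
      using card_image[OF inj_prod_encode] .
    also have "\<dots> = card Cols * card (\<iota> ` G A)" by (rule card_cartesian_product)
    also have "card (\<iota> ` G A) = card (G A)" using card_image[OF \<iota>] .
    finally show ?thesis .
  qed
  then have "card Cols * card (G A) \<le> card (chi ` (cmp zz ` Hom A B))"
    using card_mono[OF finR incl2] by simp
  then have "card Cols * card (G A) \<le> N * card (G (F A))" using le1 by simp
  then have "card Cols * card (G A) < card (G A) * Suc m" using mN by simp
  moreover have "card (G A) * Suc m \<le> card (G A) * card Cols"
    using mC by (intro mult_le_mono2) simp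
  ultimately show False by (simp add: mult.commute)
qed

end


theorem corollary5p6:
  fixes Ob :: "'o set" and Mor :: "'m set" and dm cd :: "'m \<Rightarrow> 'o"
    and cmp :: "'m \<Rightarrow> 'm \<Rightarrow> 'm" and ident :: "'o \<Rightarrow> 'm"
    and T :: "'o \<Rightarrow> 'o \<Rightarrow> 'm topology"
    and DOb :: "'o set" and S :: 'o and F :: "'o \<Rightarrow> 'o" and \<Phi> :: "'o \<Rightarrow> 'm \<Rightarrow> 'm"
    and G :: "'o \<Rightarrow> 'm set"
  assumes cat: "is_category Ob Mor dm cd cmp ident"
    and mono: "all_mono Mor dm cd cmp"
    and enriched: "Top_enriched Ob Mor dm cd cmp T"
    and hausdorff: "\<forall>A\<in>Ob. \<forall>B\<in>Ob. Hausdorff_space (T A B)"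
    and DsubC: "DOb \<subseteq> Ob"
    and Dfin: "skeletal_cat_finite_objects Mor dm cd cmp ident DOb"
    and S_in: "S \<in> Ob"
    and universal: "\<forall>D\<in>DOb. hom Mor dm cd D S \<noteq> {}"
    and approx: "approximable Mor dm cd cmp T DOb S F \<Phi>"
    and groups: "\<forall>A\<in>Ob. subgroup_Aut Mor dm cd cmp ident A (G A)"
    and lcsc: "\<forall>A\<in>DOb. locally_compact_space (T A S) \<and> second_countable (T A S)
                        \<and> Hausdorff_space (T A S)"
  shows "(\<forall>A\<in>DOb. finite (G A) \<and> finite (G (F A)) \<and>
            small_ramsey_degree Mor dm cd cmp G DOb A
              \<le> ereal (real (card (G (F A))) / real (card (G A)))
                 * big_ramsey_degree Mor dm cd cmp T G (F A) S)
       \<and> ((\<forall>A\<in>DOb. big_ramsey_degree Mor dm cd cmp T G A S < \<infinity>)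
            \<longrightarrow> (\<forall>A\<in>DOb. small_ramsey_degree Mor dm cd cmp G DOb A < \<infinity>))"
proof -
  interpret ctx2 Ob Mor dm cd cmp ident G T DOb S F \<Phi>
  proof (intro ctx2.intro ctx.intro ctx2_axioms.intro)
    show "is_category Ob Mor dm cd cmp ident" by (rule cat)
    show "all_mono Mor dm cd cmp" by (rule mono)
    show "\<forall>A\<in>Ob. subgroup_Aut Mor dm cd cmp ident A (G A)" by (rule groups)
    show "Top_enriched Ob Mor dm cd cmp T" by (rule enriched)
    show "\<forall>A\<in>Ob. \<forall>B\<in>Ob. Hausdorff_space (T A B)" by (rule hausdorff)
    show "DOb \<subseteq> Ob" by (rule DsubC)
    show "skeletal_cat_finite_objects Mor dm cd cmp ident DOb" by (rule Dfin)
    show "S \<in> Ob" by (rule S_in)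
    show "\<forall>D\<in>DOb. hom Mor dm cd D S \<noteq> {}" by (rule universal)
    show "approximable Mor dm cd cmp T DOb S F \<Phi>" by (rule approx)
    show "\<forall>A\<in>DOb. locally_compact_space (T A S) \<and> second_countable (T A S) \<and> Hausdorff_space (T A S)"
      by (rule lcsc)
  qed
  have bigform: "big_ramsey_degree Mor dm cd cmp T G X S = ereal (real (LEAST n. n \<ge> 1 \<and> Pbig Mor dm cd cmp T G X S n))
      \<or> big_ramsey_degree Mor dm cd cmp T G X S = \<infinity>" for X
    unfolding big_eq least_pos_or_inf_def by simp
  have main: "small_ramsey_degree Mor dm cd cmp G DOb A
              \<le> ereal (real (card (G (F A))) / real (card (G A)))
                 * big_ramsey_degree Mor dm cd cmp T G (F A) S" if A: "A \<in> DOb" for A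
  proof -
    define g where "g = card (G (F A))"
    define a where "a = card (G A)"
    have FAD: "F A \<in> DOb" using F_D[OF A] .
    have gpos: "g > 0" unfolding g_def using G_card_pos[OF FAD] .
    have apos: "a > 0" unfolding a_def using G_card_pos[OF A] .
    have rpos: "real g / real a > 0" using gpos apos by simp
    show ?thesis
    proof (cases "\<exists>n. n \<ge> 1 \<and> Pbig Mor dm cd cmp T G (F A) S n")
      case False
      then have "big_ramsey_degree Mor dm cd cmp T G (F A) S = \<infinity>"
        unfolding big_eq least_pos_or_inf_def by simp
      then show ?thesis using rpos gpos apos unfolding g_def a_def by simp
    next
      case True
      define N where "N = (LEAST n. n \<ge> 1 \<and> Pbig Mor dm cd cmp T G (F A) S n)"
      have N: "N \<ge> 1 \<and> Pbig Mor dm cd cmp T G (F A) S N"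
        unfolding N_def using LeastI_ex[OF True] .
      have bigN: "big_ramsey_degree Mor dm cd cmp T G (F A) S = ereal (real N)"
        unfolding big_eq least_pos_or_inf_def N_def using True by simp
      define m where "m = N * g div a"
      have dm: "N * g = m * a + N * g mod a" unfolding m_def by simp
      have md: "N * g mod a < a" using apos by simp
      have mN: "N * g < a * Suc m"
      proof -
        have e1: "a * Suc m = a * m + a" by simp
        have e2: "a * m = m * a" by (rule mult.commute)
        have "N * g < m * a + a" using dm md by linarith
        then show ?thesis unfolding e1 e2 .
      qed
      have Ps: "Psmall Mor dm cd cmp G DOb A m"
        using main_P[OF A conjunct2[OF N]] mN unfolding g_def a_def by simp
      have m1: "m \<ge> 1"
      proof (rule ccontr)
        assume "\<not> m \<ge> 1"
        then have "m = 0" by simp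
        then show False using Ps Psmall_0[OF A] by simp
      qed
      have ex: "\<exists>n. n \<ge> 1 \<and> Psmall Mor dm cd cmp G DOb A n" using Ps m1 by blast
      have "(LEAST n. n \<ge> 1 \<and> Psmall Mor dm cd cmp G DOb A n) \<le> m"
        using Ps m1 by (intro Least_le) simp
      then have sm: "small_ramsey_degree Mor dm cd cmp G DOb A \<le> ereal (real m)"
        unfolding small_eq least_pos_or_inf_def using ex by simp
      have "m * a \<le> N * g" using dm by simp
      then have "real m * real a \<le> real N * real g" by (metis of_nat_le_iff of_nat_mult)
      then have "real m \<le> real g / real a * real N"
        using apos by (simp add: field_simps)
      then have e: "ereal (real m) \<le> ereal (real g / real a) * ereal (real N)" by simp
      have "small_ramsey_degree Mor dm cd cmp G DOb A \<le> ereal (real g / real a) * ereal (real N)"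
        by (rule order_trans[OF sm e])
      then show ?thesis unfolding bigN g_def a_def .
    qed
  qed
  have part1: "\<forall>A\<in>DOb. finite (G A) \<and> finite (G (F A)) \<and>
            small_ramsey_degree Mor dm cd cmp G DOb A
              \<le> ereal (real (card (G (F A))) / real (card (G A)))
                 * big_ramsey_degree Mor dm cd cmp T G (F A) S"
    using G_fin F_D main by blast
  have part2: "small_ramsey_degree Mor dm cd cmp G DOb A < \<infinity>"
    if all: "\<forall>A\<in>DOb. big_ramsey_degree Mor dm cd cmp T G A S < \<infinity>" and A: "A \<in> DOb" for A
  proof -
    have FAD: "F A \<in> DOb" using F_D[OF A] .
    have lt: "big_ramsey_degree Mor dm cd cmp T G (F A) S < \<infinity>" using all FAD by blast
    obtain N where bN: "big_ramsey_degree Mor dm cd cmp T G (F A) S = ereal N"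
      using bigform[of "F A"] lt by auto
    have "small_ramsey_degree Mor dm cd cmp G DOb A
              \<le> ereal (real (card (G (F A))) / real (card (G A))) * ereal N"
      using main[OF A] bN by simp
    also have "\<dots> < \<infinity>" by simp
    finally show ?thesis .
  qed
  show ?thesis using part1 part2 by blast
qed


end
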